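(* For every positive integer $n\notin\{1,2,4\}$, $A'(n,4,3)=A(n,4,3)$. Moreover, $A'(1,4,3)=A'(2,4,3)=1$ and $A'(4,4,3)=2$.
   Context: For ${\sf u},{\sf v}\in\mathbb{F}_2^n$, $\Delta({\sf u},{\sf v})$ is the Hamming distance and ${\rm wt}({\sf u})$ the Hamming weight. $A'(n,d,e)$ denotes the maximum size of a nonempty set $S\subseteq \mathbb{F}_2^n$ such that ${\rm wt}({\sf u})\le e$ for all ${\sf u}\in S$ and $\Delta({\sf u},{\sf v})\ge d$ for all distinct ${\sf u},{\sf v}\in S$. $A(n,d,e)$ denotes the maximum size of a set $S\subseteq\mathbb{F}_2^n$ all of whose elements have weight exactly $e$ and with pairwise distances at least $d$ (the maximum size of a constant-weight code). It is known that $A(n,4,3)=\left\lfloor \frac{n}{3} \left\lfloor \frac{n-1}{2} \right\rfloor \right\rfloor-1$ if $n\equiv 5 \pmod 6$ and $A(n,4,3)=\left\lfloor \frac{n}{3} \left\lfloor \frac{n-1}{2} \right\rfloor \right\rfloor$ otherwise. *)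

theory Defs
  imports Main
begin

text \<open>Vectors of F_2^n are bool lists of length n (True = 1).\<close>

definition F2 :: "nat \<Rightarrow> bool list set" where
  "F2 n = {u. length u = n}"

definition wt :: "bool list \<Rightarrow> nat" where
  "wt u = length (filter id u)"

definition hdist :: "bool list \<Rightarrow> bool list \<Rightarrow> nat" where
  "hdist u v = card {i. i < length u \<and> u ! i \<noteq> v ! i}"

definition A' :: "nat \<Rightarrow> nat \<Rightarrow> nat \<Rightarrow> nat" where
  "A' n d e = Max {card S | S. S \<subseteq> F2 n \<and> S \<noteq> {} \<and> (\<forall>u\<in>S. wt u \<le> e)
      \<and> (\<forall>u\<in>S. \<forall>v\<in>S. u \<noteq> v \<longrightarrow> hdist u v \<ge> d)}"

definition A :: "nat \<Rightarrow> nat \<Rightarrow> nat \<Rightarrow> nat" where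
  "A n d e = Max {card S | S. S \<subseteq> F2 n \<and> (\<forall>u\<in>S. wt u = e)
      \<and> (\<forall>u\<in>S. \<forall>v\<in>S. u \<noteq> v \<longrightarrow> hdist u v \<ge> d)}"

end

theory Submission imports Defs begin

definition supp :: "bool list \<Rightarrow> nat set" where
  "supp u = {i. i < length u \<and> u ! i}"
definition vec :: "nat \<Rightarrow> nat set \<Rightarrow> bool list" where
  "vec n X = map (\<lambda>i. i \<in> X) [0..<n]"
definition sd :: "nat set \<Rightarrow> nat set \<Rightarrow> nat set" where
  "sd X Y = (X - Y) \<union> (Y - X)"

lemma length_vec[simp]: "length (vec n X) = n" by (simp add: vec_def)
lemma supp_vec[simp]: "supp (vec n X) = X \<inter> {..<n}"
  by (auto simp: supp_def vec_def)
lemma vec_supp: "length u = n \<Longrightarrow> vec n (supp u) = u"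
  by (auto simp: supp_def vec_def intro!: nth_equalityI)
lemma wt_supp: "wt u = card (supp u)"
  by (simp add: wt_def supp_def length_filter_conv_card)
lemma hdist_supp: "length u = length v \<Longrightarrow> hdist u v = card (sd (supp u) (supp v))"
  unfolding hdist_def sd_def supp_def by (rule arg_cong[where f=card]) auto
lemma supp_sub: "supp u \<subseteq> {..<length u}" by (auto simp: supp_def)

definition Pf' :: "nat \<Rightarrow> nat set set \<Rightarrow> bool" where
  "Pf' n F \<longleftrightarrow> F \<subseteq> Pow {..<n} \<and> F \<noteq> {} \<and> (\<forall>X\<in>F. card X \<le> 3)
     \<and> (\<forall>X\<in>F. \<forall>Y\<in>F. X \<noteq> Y \<longrightarrow> card (sd X Y) \<ge> 4)"
definition Pf :: "nat \<Rightarrow> nat set set \<Rightarrow> bool" where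
  "Pf n F \<longleftrightarrow> F \<subseteq> Pow {..<n} \<and> (\<forall>X\<in>F. card X = 3)
     \<and> (\<forall>X\<in>F. \<forall>Y\<in>F. X \<noteq> Y \<longrightarrow> card (sd X Y) \<ge> 4)"

lemma inj_supp: "inj_on supp (F2 n)"
  by (metis (mono_tags, lifting) F2_def inj_onI mem_Collect_eq vec_supp)
lemma inj_vec: "inj_on (vec n) (Pow {..<n})"
  by (smt (verit, ccfv_SIG) Int_absorb2 PowD inj_onI supp_vec)

lemma set_eq_gen:
  assumes tr1: "\<And>S. S \<subseteq> F2 n \<Longrightarrow> P S \<Longrightarrow> Q (supp ` S)"
    and tr2: "\<And>F. F \<subseteq> Pow {..<n} \<Longrightarrow> Q F \<Longrightarrow> P (vec n ` F)"
    and q: "\<And>F. Q F \<Longrightarrow> F \<subseteq> Pow {..<n}"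
  shows "{card S | S. S \<subseteq> F2 n \<and> P S} = {card F | F. Q F}"
proof (intro equalityI subsetI)
  fix k assume "k \<in> {card S | S. S \<subseteq> F2 n \<and> P S}"
  then obtain S where S: "S \<subseteq> F2 n" "P S" "k = card S" by auto
  have "card (supp ` S) = card S" using inj_supp S(1) by (meson card_image inj_on_subset)
  then show "k \<in> {card F | F. Q F}" using tr1[OF S(1,2)] S(3) by (metis (mono_tags, lifting) mem_Collect_eq)
next
  fix k assume "k \<in> {card F | F. Q F}"
  then obtain F where F: "Q F" "k = card F" by auto
  have sub: "F \<subseteq> Pow {..<n}" using q F(1) .
  have "card (vec n ` F) = card F" using inj_vec sub by (meson card_image inj_on_subset)
  moreover have "vec n ` F \<subseteq> F2 n" by (auto simp: F2_def)
  ultimately show "k \<in> {card S | S. S \<subseteq> F2 n \<and> P S}" using tr2[OF sub F(1)] F(2) by (metis (mono_tags, lifting) mem_Collect_eq)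
qed

lemma A'_fam: "A' n 4 3 = Max {card F | F. Pf' n F}"
proof -
  have "{card S | S. S \<subseteq> F2 n \<and> S \<noteq> {} \<and> (\<forall>u\<in>S. wt u \<le> 3)
      \<and> (\<forall>u\<in>S. \<forall>v\<in>S. u \<noteq> v \<longrightarrow> hdist u v \<ge> 4)} = {card F | F. Pf' n F}"
  proof (rule set_eq_gen)
    fix S assume S: "S \<subseteq> F2 n" and P: "S \<noteq> {} \<and> (\<forall>u\<in>S. wt u \<le> 3)
      \<and> (\<forall>u\<in>S. \<forall>v\<in>S. u \<noteq> v \<longrightarrow> hdist u v \<ge> 4)"
    have len: "\<And>u. u \<in> S \<Longrightarrow> length u = n" using S by (auto simp: F2_def)
    show "Pf' n (supp ` S)"
      unfolding Pf'_def
    proof (intro conjI ballI impI)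
      show "supp ` S \<subseteq> Pow {..<n}" using len supp_sub by blast
      show "supp ` S \<noteq> {}" using P by auto
      fix X assume "X \<in> supp ` S" then obtain u where u: "u \<in> S" "X = supp u" by auto
      then show "card X \<le> 3" using P wt_supp by auto
      fix Y assume "Y \<in> supp ` S" "X \<noteq> Y"
      then obtain v where v: "v \<in> S" "Y = supp v" by auto
      have "u \<noteq> v" using u v \<open>X \<noteq> Y\<close> by auto
      then show "card (sd X Y) \<ge> 4" using P u v len hdist_supp by metis
    qed
  next
    fix F assume sub: "F \<subseteq> Pow {..<n}" and Q: "Pf' n F"
    have sv: "\<And>X. X \<in> F \<Longrightarrow> supp (vec n X) = X" using sub by auto
    show "vec n ` F \<noteq> {} \<and> (\<forall>u\<in>vec n ` F. wt u \<le> 3)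
      \<and> (\<forall>u\<in>vec n ` F. \<forall>v\<in>vec n ` F. u \<noteq> v \<longrightarrow> hdist u v \<ge> 4)"
      using Q sv unfolding Pf'_def by (auto simp: wt_supp hdist_supp)
  next
    show "\<And>F. Pf' n F \<Longrightarrow> F \<subseteq> Pow {..<n}" by (simp add: Pf'_def)
  qed
  then show ?thesis by (simp add: A'_def)
qed

lemma A_fam: "A n 4 3 = Max {card F | F. Pf n F}"
proof -
  have "{card S | S. S \<subseteq> F2 n \<and> (\<forall>u\<in>S. wt u = 3)
      \<and> (\<forall>u\<in>S. \<forall>v\<in>S. u \<noteq> v \<longrightarrow> hdist u v \<ge> 4)} = {card F | F. Pf n F}"
  proof (rule set_eq_gen)
    fix S assume S: "S \<subseteq> F2 n" and P: "(\<forall>u\<in>S. wt u = 3)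
      \<and> (\<forall>u\<in>S. \<forall>v\<in>S. u \<noteq> v \<longrightarrow> hdist u v \<ge> 4)"
    have len: "\<And>u. u \<in> S \<Longrightarrow> length u = n" using S by (auto simp: F2_def)
    show "Pf n (supp ` S)"
      unfolding Pf_def
    proof (intro conjI ballI impI)
      show "supp ` S \<subseteq> Pow {..<n}" using len supp_sub by blast
      fix X assume "X \<in> supp ` S" then obtain u where u: "u \<in> S" "X = supp u" by auto
      then show "card X = 3" using P wt_supp by auto
      fix Y assume "Y \<in> supp ` S" "X \<noteq> Y"
      then obtain v where v: "v \<in> S" "Y = supp v" by auto
      have "u \<noteq> v" using u v \<open>X \<noteq> Y\<close> by auto
      then show "card (sd X Y) \<ge> 4" using P u v len hdist_supp by metis
    qed
  next
    fix F assume sub: "F \<subseteq> Pow {..<n}" and Q: "Pf n F"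
    have sv: "\<And>X. X \<in> F \<Longrightarrow> supp (vec n X) = X" using sub by auto
    show "(\<forall>u\<in>vec n ` F. wt u = 3)
      \<and> (\<forall>u\<in>vec n ` F. \<forall>v\<in>vec n ` F. u \<noteq> v \<longrightarrow> hdist u v \<ge> 4)"
      using Q sv unfolding Pf_def by (auto simp: wt_supp hdist_supp)
  next
    show "\<And>F. Pf n F \<Longrightarrow> F \<subseteq> Pow {..<n}" by (simp add: Pf_def)
  qed
  then show ?thesis by (simp add: A_def)
qed


lemma sd_card: "finite X \<Longrightarrow> finite Y \<Longrightarrow> card (sd X Y) + 2 * card (X \<inter> Y) = card X + card Y"
proof -
  assume f: "finite X" "finite Y"
  have "card (sd X Y) = card (X - Y) + card (Y - X)"
    unfolding sd_def using f by (intro card_Un_disjoint) auto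
  moreover have "card (X - Y) = card X - card (X \<inter> Y)" using f by (simp add: card_Diff_subset_Int)
  moreover have "card (Y - X) = card Y - card (X \<inter> Y)" using f
    by (metis card_Diff_subset_Int finite_Int inf_commute)
  moreover have "card (X \<inter> Y) \<le> card X" "card (X \<inter> Y) \<le> card Y" using f
    by (auto intro: card_mono)
  ultimately show ?thesis by linarith
qed

lemma Pf'_pair: "Pf' n F \<Longrightarrow> X \<in> F \<Longrightarrow> Y \<in> F \<Longrightarrow> X \<noteq> Y \<Longrightarrow> card X + card Y \<ge> 4 + 2 * card (X \<inter> Y)"
proof -
  assume a: "Pf' n F" "X \<in> F" "Y \<in> F" "X \<noteq> Y"
  have f: "finite X" "finite Y" using a unfolding Pf'_def by (meson PowD finite_lessThan finite_subset subsetD)+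
  have "card (sd X Y) \<ge> 4" using a unfolding Pf'_def by auto
  then show ?thesis using sd_card[OF f] by linarith
qed

lemma Pf_intro:
  assumes "G \<subseteq> Pow {..<n}" "\<And>X. X \<in> G \<Longrightarrow> card X = 3"
    "\<And>X Y. X \<in> G \<Longrightarrow> Y \<in> G \<Longrightarrow> X \<noteq> Y \<Longrightarrow> card (X \<inter> Y) \<le> 1"
  shows "Pf n G"
  unfolding Pf_def
proof (intro conjI ballI impI)
  show "G \<subseteq> Pow {..<n}" by fact
  fix X assume X: "X \<in> G" then show "card X = 3" using assms by auto
  fix Y assume Y: "Y \<in> G" "X \<noteq> Y"
  have f: "finite X" "finite Y" using X Y assms(1) by (auto intro: finite_subset)
  show "card (sd X Y) \<ge> 4" using sd_card[OF f] assms(2)[OF X] assms(2)[OF Y(1)] assms(3)[OF X Y] by linarith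
qed

lemma Pf_triple: "Pf n F \<Longrightarrow> X \<in> F \<Longrightarrow> Y \<in> F \<Longrightarrow> X \<noteq> Y \<Longrightarrow> card (X \<inter> Y) \<le> 1"
proof -
  assume a: "Pf n F" "X \<in> F" "Y \<in> F" "X \<noteq> Y"
  have f: "finite X" "finite Y" using a unfolding Pf_def by (meson PowD finite_lessThan finite_subset subsetD)+
  have "card (sd X Y) \<ge> 4" "card X = 3" "card Y = 3" using a unfolding Pf_def by auto
  then show ?thesis using sd_card[OF f] by linarith
qed

lemma triple_exists:
  assumes "n \<ge> 3" shows "Pf n {{0,1,2}}"
  using assms by (intro Pf_intro) auto

lemma fin_cards: "finite {card F | F. F \<subseteq> Pow {..<(n::nat)} \<and> P F}"
proof -
  have "{card F | F. F \<subseteq> Pow {..<(n::nat)} \<and> P F} \<subseteq> card ` Pow (Pow {..<n})" by auto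
  then show ?thesis by (rule finite_subset) simp
qed

lemma fin_Pf': "finite {card F | F. Pf' n F}"
  using fin_cards[of n "\<lambda>F. Pf' n F"] unfolding Pf'_def by (smt (verit) Collect_cong)
lemma fin_Pf: "finite {card F | F. Pf n F}"
  using fin_cards[of n "\<lambda>F. Pf n F"] unfolding Pf_def by (smt (verit) Collect_cong)



lemma ok3: "finite X \<Longrightarrow> \<not>(a\<in>X\<and>b\<in>X) \<Longrightarrow> \<not>(a\<in>X\<and>c\<in>X) \<Longrightarrow> \<not>(b\<in>X\<and>c\<in>X) \<Longrightarrow> card (X \<inter> {a,b,c}) \<le> 1"
  by (subst One_nat_def, subst card_le_Suc0_iff_eq) auto

lemma Pf'_basic: "Pf' n F \<Longrightarrow> finite F \<and> (\<forall>X\<in>F. X \<subseteq> {..<n} \<and> finite X \<and> card X \<le> 3)"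
  unfolding Pf'_def by (meson PowD finite_Pow_iff finite_lessThan finite_subset subsetD)

lemma Pf'_pairdisj:
  assumes "Pf' n F" "P \<in> F" "card P = 2" "Y \<in> F" "Y \<noteq> P"
  shows "P \<inter> Y = {} \<and> card Y \<ge> 2"
proof -
  have "card P + card Y \<ge> 4 + 2 * card (P \<inter> Y)" using Pf'_pair[OF assms(1,2,4)] assms(5) by auto
  moreover have "card Y \<le> 3" "finite P" using Pf'_basic[OF assms(1)] assms by auto
  ultimately have "card (P \<inter> Y) = 0" "card Y \<ge> 2" using assms(3) by linarith+
  then show ?thesis using \<open>finite P\<close> by simp
qed

lemma Pf'_single:
  assumes "Pf' n F" "{p} \<in> F" "Y \<in> F" "Y \<noteq> {p}"
  shows "card Y = 3 \<and> p \<notin> Y"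
proof -
  have "card {p} + card Y \<ge> 4 + 2 * card ({p} \<inter> Y)" using Pf'_pair[OF assms(1,2,3)] assms(4) by auto
  moreover have "card Y \<le> 3" "finite Y" using Pf'_basic[OF assms(1)] assms by auto
  ultimately show ?thesis by (cases "p \<in> Y") auto
qed

lemma Pf'_tri:
  assumes "Pf' n F" "X \<in> F" "Y \<in> F" "X \<noteq> Y" "card X = 3" "card Y = 3"
  shows "card (X \<inter> Y) \<le> 1"
  using Pf'_pair[OF assms(1-4)] assms(5,6) by linarith

lemma Pf'_uniq:
  assumes "Pf' n F" "X \<in> F" "Y \<in> F" "card X = 3" "card Y = 3" "u \<noteq> v" "u \<in> X" "v \<in> X" "u \<in> Y" "v \<in> Y"
  shows "X = Y"
proof (rule ccontr)
  assume "X \<noteq> Y"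
  then have "card (X \<inter> Y) \<le> 1" using Pf'_tri assms by blast
  moreover have "{u,v} \<subseteq> X \<inter> Y" using assms by auto
  moreover have "finite X" using Pf'_basic assms(1,2) by blast
  ultimately have "card {u,v} \<le> 1" by (meson card_mono finite_Int le_trans)
  then show False using assms(6) by simp
qed

lemma case_empty:
  assumes "Pf' n F" "{} \<in> F" "n \<ge> 3"
  shows "\<exists>G. Pf n G \<and> card F \<le> card G"
proof -
  have "F \<subseteq> {{}}"
  proof
    fix Y assume Y: "Y \<in> F"
    show "Y \<in> {{}}"
    proof (rule ccontr)
      assume "Y \<notin> {{}}"
      then have "card {} + card Y \<ge> 4 + 2 * card ({} \<inter> Y)" using Pf'_pair[OF assms(1,2) Y] by auto
      moreover have "card Y \<le> 3" using Pf'_basic[OF assms(1)] Y by auto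
      ultimately show False by simp
    qed
  qed
  then have "card F \<le> 1" by (metis card.empty card.insert card_mono empty_iff finite.emptyI finite.insertI One_nat_def)
  moreover have "card {{0::nat,1,2}} = 1" by simp
  ultimately show ?thesis using triple_exists[OF assms(3)] by metis
qed

lemma case_triples:
  assumes "Pf' n F" "\<forall>X\<in>F. card X = 3"
  shows "\<exists>G. Pf n G \<and> card F \<le> card G"
  using assms unfolding Pf'_def Pf_def by blast



lemma case_A1:
  assumes P: "Pf' n F" and P0: "P0 \<in> F" "card P0 = 2" and x: "x < n" "\<forall>P\<in>F. card P = 2 \<longrightarrow> x \<notin> P"
  shows "\<exists>G. Pf n G \<and> card F \<le> card G"
proof -
  note B = Pf'_basic[OF P]
  define T where "T = {X\<in>F. card X = 3}"
  define Pr where "Pr = {X\<in>F. card X = 2}"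
  have c23: "\<And>Y. Y \<in> F \<Longrightarrow> card Y = 2 \<or> card Y = 3"
  proof -
    fix Y assume Y: "Y \<in> F"
    show "card Y = 2 \<or> card Y = 3"
    proof (cases "Y = P0")
      case False then show ?thesis using Pf'_pairdisj[OF P P0 Y] B Y by fastforce
    qed (use P0 in auto)
  qed
  have FTP: "F = T \<union> Pr" using c23 unfolding T_def Pr_def by auto
  have fT: "finite T" "finite Pr" using B unfolding T_def Pr_def by auto
  have cF: "card F = card T + card Pr"
    unfolding FTP by (rule card_Un_disjoint) (use fT in \<open>auto simp: T_def Pr_def\<close>)
  have disj: "\<And>Q Y. Q \<in> Pr \<Longrightarrow> Y \<in> F \<Longrightarrow> Y \<noteq> Q \<Longrightarrow> Q \<inter> Y = {}"
    using Pf'_pairdisj[OF P] unfolding Pr_def by blast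
  have xn: "\<And>Q. Q \<in> Pr \<Longrightarrow> x \<notin> Q" using x unfolding Pr_def by auto
  define G where "G = T \<union> insert x ` Pr"
  have inj: "inj_on (insert x) Pr"
  proof (rule inj_onI)
    fix Q Q' assume "Q \<in> Pr" "Q' \<in> Pr" "insert x Q = insert x Q'"
    then show "Q = Q'" using xn by (metis insert_ident)
  qed
  have dis2: "T \<inter> insert x ` Pr = {}"
  proof (rule ccontr)
    assume "T \<inter> insert x ` Pr \<noteq> {}"
    then obtain Q where Q: "Q \<in> Pr" "insert x Q \<in> T" by auto
    then have "insert x Q \<noteq> Q" using xn by auto
    then have "Q \<inter> insert x Q = {}" using disj[OF Q(1)] Q(2) unfolding T_def by auto
    moreover have "Q \<noteq> {}" using Q(1) unfolding Pr_def by auto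
    ultimately show False by auto
  qed
  have cG: "card G = card T + card Pr"
    unfolding G_def using card_Un_disjoint[OF fT(1) finite_imageI[OF fT(2)] dis2] card_image[OF inj] by simp
  have "Pf n G"
  proof (rule Pf_intro)
    show "G \<subseteq> Pow {..<n}" using B x(1) unfolding G_def T_def Pr_def by auto
    fix X assume X: "X \<in> G"
    show "card X = 3"
      using X xn B unfolding G_def T_def Pr_def by auto
    fix Y assume Y: "Y \<in> G" and XY: "X \<noteq> Y"
    have TT: "\<And>X Y. X \<in> T \<Longrightarrow> Y \<in> T \<Longrightarrow> X \<noteq> Y \<Longrightarrow> card (X \<inter> Y) \<le> 1"
      using Pf'_tri[OF P] unfolding T_def by blast
    have TN: "\<And>X Q. X \<in> T \<Longrightarrow> Q \<in> Pr \<Longrightarrow> card (X \<inter> insert x Q) \<le> 1"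
    proof -
      fix X Q assume XQ: "X \<in> T" "Q \<in> Pr"
      have "X \<noteq> Q" using XQ unfolding T_def Pr_def by auto
      then have "Q \<inter> X = {}" using disj XQ unfolding T_def by auto
      then have "X \<inter> insert x Q \<subseteq> {x}" by auto
      then show "card (X \<inter> insert x Q) \<le> 1" by (metis card.empty card.insert card_mono empty_iff finite.emptyI finite.insertI One_nat_def)
    qed
    have NN: "\<And>Q Q'. Q \<in> Pr \<Longrightarrow> Q' \<in> Pr \<Longrightarrow> Q \<noteq> Q' \<Longrightarrow> card (insert x Q \<inter> insert x Q') \<le> 1"
    proof -
      fix Q Q' assume QQ: "Q \<in> Pr" "Q' \<in> Pr" "Q \<noteq> Q'"
      then have "Q \<inter> Q' = {}" using disj unfolding Pr_def by auto
      then have "insert x Q \<inter> insert x Q' \<subseteq> {x}" by auto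
      then show "card (insert x Q \<inter> insert x Q') \<le> 1" by (metis card.empty card.insert card_mono empty_iff finite.emptyI finite.insertI One_nat_def)
    qed
    from X consider "X \<in> T" | Q where "Q \<in> Pr" "X = insert x Q" unfolding G_def by auto
    then show "card (X \<inter> Y) \<le> 1"
    proof cases
      case 1
      from Y consider "Y \<in> T" | Q where "Q \<in> Pr" "Y = insert x Q" unfolding G_def by auto
      then show ?thesis
      proof cases
        case 1 then show ?thesis using TT \<open>X \<in> T\<close> XY by auto
      next
        case 2 then show ?thesis using TN \<open>X \<in> T\<close> by auto
      qed
    next
      case (2 Q)
      from Y consider "Y \<in> T" | Q' where "Q' \<in> Pr" "Y = insert x Q'" unfolding G_def by auto
      then show ?thesis
      proof cases
        case 1 then show ?thesis using TN 2 by (metis Int_commute)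
      next
        case (2 Q') then show ?thesis using NN \<open>Q \<in> Pr\<close> \<open>X = insert x Q\<close> XY by blast
      qed
    qed
  qed
  then show ?thesis using cF cG by auto
qed



lemma case_A2:
  assumes P: "Pf' n F" and P0: "P0 \<in> F" "card P0 = 2"
    and cov: "\<forall>x<n. \<exists>Q\<in>F. card Q = 2 \<and> x \<in> Q" and n: "n = 3 \<or> n \<ge> 5"
  shows "\<exists>G. Pf n G \<and> card F \<le> card G"
proof -
  note B = Pf'_basic[OF P]
  have all2: "\<And>X. X \<in> F \<Longrightarrow> card X = 2"
  proof (rule ccontr)
    fix X assume X: "X \<in> F" "card X \<noteq> 2"
    have "card X \<ge> 2" using X Pf'_pairdisj[OF P P0] P0 by (cases "X = P0") auto
    then obtain y where y: "y \<in> X" by fastforce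
    then have "y < n" using B X by auto
    then obtain Q where Q: "Q \<in> F" "card Q = 2" "y \<in> Q" using cov by auto
    have "Q \<noteq> X" using Q X by auto
    then show False using Pf'_pairdisj[OF P Q(1,2) X(1)] Q y by auto
  qed
  have disj: "\<And>Q Y. Q \<in> F \<Longrightarrow> Y \<in> F \<Longrightarrow> Y \<noteq> Q \<Longrightarrow> Q \<inter> Y = {}"
    using Pf'_pairdisj[OF P] all2 by blast
  have U: "\<Union>F = {..<n}" using cov B by auto
  have "card (\<Union>F) = sum card F"
    by (rule card_Union_disjoint) (use disj B in \<open>auto simp: pairwise_def disjnt_def\<close>)
  also have "\<dots> = 2 * card F" using all2 by simp
  finally have "n = 2 * card F" using U by simp
  then have "card F \<ge> 3" using n by presburger
  then obtain W where W: "W \<subseteq> F" "card W = 3" by (meson obtain_subset_with_card_n)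
  then obtain P1 P2 P3 where W3: "W = {P1,P2,P3}" "P1 \<noteq> P2" "P2 \<noteq> P3" "P1 \<noteq> P3"
    by (auto simp: card_3_iff)
  have inF: "P1 \<in> F" "P2 \<in> F" "P3 \<in> F" using W W3 by auto
  obtain a1 b1 where p1: "P1 = {a1,b1}" "a1 \<noteq> b1" using all2[OF inF(1)] by (auto simp: card_2_iff)
  obtain a2 b2 where p2: "P2 = {a2,b2}" "a2 \<noteq> b2" using all2[OF inF(2)] by (auto simp: card_2_iff)
  obtain a3 b3 where p3: "P3 = {a3,b3}" "a3 \<noteq> b3" using all2[OF inF(3)] by (auto simp: card_2_iff)
  have d12: "P1 \<inter> P2 = {}" "P2 \<inter> P3 = {}" "P1 \<inter> P3 = {}" using disj inF W3 by auto
  define N where "N = {b1,a2,a3}"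
  define G where "G = insert N (insert a1 ` (F - {P1}))"
  have a1n: "\<And>Q. Q \<in> F - {P1} \<Longrightarrow> a1 \<notin> Q" using disj inF p1 by blast
  have inj: "inj_on (insert a1) (F - {P1})"
  proof (rule inj_onI)
    fix Q Q' assume "Q \<in> F - {P1}" "Q' \<in> F - {P1}" "insert a1 Q = insert a1 Q'"
    then show "Q = Q'" using a1n by (metis insert_ident)
  qed
  have fF: "finite F" using B by auto
  have Nn: "N \<notin> insert a1 ` (F - {P1})" unfolding N_def using d12 p1 p2 p3 by auto
  have cG: "card G = card F"
  proof -
    have "card G = Suc (card (insert a1 ` (F - {P1})))" unfolding G_def using Nn fF by simp
    also have "\<dots> = Suc (card (F - {P1}))" using card_image[OF inj] by simp
    also have "\<dots> = card F" using inF(1) fF by (metis card_Suc_Diff1)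
    finally show ?thesis .
  qed
  have "Pf n G"
  proof (rule Pf_intro)
    show "G \<subseteq> Pow {..<n}" using B inF p1 p2 p3 unfolding G_def N_def by auto
    fix X assume X: "X \<in> G"
    show "card X = 3"
    proof -
      { assume "X = N" then have ?thesis unfolding N_def using d12 p1 p2 p3 by auto }
      moreover
      { fix Q assume "Q \<in> F - {P1}" "X = insert a1 Q"
        then have ?thesis using a1n all2 B by auto }
      ultimately show ?thesis using X unfolding G_def by auto
    qed
    fix Y assume Y: "Y \<in> G" and XY: "X \<noteq> Y"
    have NQ: "\<And>Q. Q \<in> F - {P1} \<Longrightarrow> card (insert a1 Q \<inter> N) \<le> 1"
    proof -
      fix Q assume Q: "Q \<in> F - {P1}"
      have fQ: "finite (insert a1 Q)" using B Q by auto
      have "b1 \<notin> Q" using disj Q inF p1 by blast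
      moreover have "\<not> (a2 \<in> Q \<and> a3 \<in> Q)"
      proof
        assume h: "a2 \<in> Q \<and> a3 \<in> Q"
        then have "Q = P2" using disj Q inF p2 by blast
        then show False using h d12 p3 by auto
      qed
      moreover have "a1 \<noteq> b1" "a1 \<noteq> a2" "a1 \<noteq> a3" using d12 p1 p2 p3 by auto
      ultimately show "card (insert a1 Q \<inter> N) \<le> 1" unfolding N_def by (intro ok3 fQ) auto
    qed
    have QQ: "\<And>Q Q'. Q \<in> F - {P1} \<Longrightarrow> Q' \<in> F - {P1} \<Longrightarrow> Q \<noteq> Q' \<Longrightarrow> card (insert a1 Q \<inter> insert a1 Q') \<le> 1"
    proof -
      fix Q Q' assume QQ: "Q \<in> F - {P1}" "Q' \<in> F - {P1}" "Q \<noteq> Q'"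
      then have "Q \<inter> Q' = {}" using disj by auto
      then have "insert a1 Q \<inter> insert a1 Q' \<subseteq> {a1}" by auto
      then show "card (insert a1 Q \<inter> insert a1 Q') \<le> 1" by (metis card.empty card.insert card_mono empty_iff finite.emptyI finite.insertI One_nat_def)
    qed
    from X consider "X = N" | Q where "Q \<in> F - {P1}" "X = insert a1 Q" unfolding G_def by auto
    then show "card (X \<inter> Y) \<le> 1"
    proof cases
      case 1
      from Y consider "Y = N" | Q where "Q \<in> F - {P1}" "Y = insert a1 Q" unfolding G_def by auto
      then show ?thesis
      proof cases
        case 1 then show ?thesis using \<open>X = N\<close> XY by auto
      next
        case 2 then show ?thesis using NQ \<open>X = N\<close> by (metis Int_commute)
      qed
    next
      case (2 Q)
      from Y consider "Y = N" | Q' where "Q' \<in> F - {P1}" "Y = insert a1 Q'" unfolding G_def by auto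
      then show ?thesis
      proof cases
        case 1 then show ?thesis using NQ 2 by auto
      next
        case (2 Q') then show ?thesis using QQ \<open>Q \<in> F - {P1}\<close> \<open>X = insert a1 Q\<close> XY by blast
      qed
    qed
  qed
  then show ?thesis using cG by auto
qed



lemma card1_le: "X \<subseteq> {a} \<Longrightarrow> card X \<le> 1"
  by (metis card.empty card.insert card_mono empty_iff finite.emptyI finite.insertI One_nat_def)

lemma case_B1:
  assumes P: "Pf' n F" and S: "{p} \<in> F"
    and xy: "x < n" "y < n" "x \<noteq> y" "x \<noteq> p" "y \<noteq> p" "\<forall>X\<in>F - {{p}}. \<not> (x \<in> X \<and> y \<in> X)"
  shows "\<exists>G. Pf n G \<and> card F \<le> card G"
proof -
  note B = Pf'_basic[OF P]
  define T where "T = F - {{p}}"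
  have T3: "\<And>X. X \<in> T \<Longrightarrow> card X = 3 \<and> p \<notin> X" using Pf'_single[OF P S] unfolding T_def by auto
  have fT: "finite T" using B unfolding T_def by auto
  have cF: "card F = Suc (card T)" using S B unfolding T_def by (metis card_Suc_Diff1)
  define N where "N = {p,x,y}"
  define G where "G = insert N T"
  have NT: "N \<notin> T" using T3 unfolding N_def by auto
  have cG: "card G = Suc (card T)" unfolding G_def using NT fT by simp
  have pn: "p < n" using B S by auto
  have "Pf n G"
  proof (rule Pf_intro)
    show "G \<subseteq> Pow {..<n}" using B xy pn unfolding G_def N_def T_def by auto
    fix X assume X: "X \<in> G"
    show "card X = 3" using X T3 xy unfolding G_def N_def by auto
    fix Y assume Y: "Y \<in> G" and XY: "X \<noteq> Y"
    have TT: "\<And>X Y. X \<in> T \<Longrightarrow> Y \<in> T \<Longrightarrow> X \<noteq> Y \<Longrightarrow> card (X \<inter> Y) \<le> 1"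
      using Pf'_tri[OF P] T3 unfolding T_def by blast
    have TN: "\<And>X. X \<in> T \<Longrightarrow> card (X \<inter> N) \<le> 1"
      unfolding N_def using T3 xy B unfolding T_def by (intro ok3) auto
    have TN2: "\<And>X. X \<in> T \<Longrightarrow> card (N \<inter> X) \<le> 1" using TN by (simp add: Int_commute)
    show "card (X \<inter> Y) \<le> 1"
      using X Y XY TT TN TN2 unfolding G_def by blast
  qed
  then show ?thesis using cF cG by auto
qed



lemma ne_of_card: "card Z \<ge> 1 \<Longrightarrow> \<exists>x. x \<in> Z"
  by (metis all_not_in_conv card.empty not_one_le_zero)

lemma case_B2:
  assumes P: "Pf' n F" and S: "{p} \<in> F"
    and cov: "\<And>x y. x < n \<Longrightarrow> y < n \<Longrightarrow> x \<noteq> y \<Longrightarrow> x \<noteq> p \<Longrightarrow> y \<noteq> p \<Longrightarrow> \<exists>X\<in>F - {{p}}. x \<in> X \<and> y \<in> X"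
    and n: "n = 3 \<or> n \<ge> 5"
  shows "\<exists>G. Pf n G \<and> card F \<le> card G"
proof -
  note B = Pf'_basic[OF P]
  define T where "T = F - {{p}}"
  have T3: "\<And>X. X \<in> T \<Longrightarrow> card X = 3 \<and> p \<notin> X" using Pf'_single[OF P S] unfolding T_def by auto
  have TF: "T \<subseteq> F" unfolding T_def by auto
  have fT: "finite T" using B unfolding T_def by auto
  have cF: "card F = Suc (card T)" using S B unfolding T_def by (metis card_Suc_Diff1)
  have pn: "p < n" using B S by auto
  define V where "V = {..<n} - {p}"
  have cV: "card V = n - 1" unfolding V_def using pn by simp
  have TV: "\<And>X. X \<in> T \<Longrightarrow> X \<subseteq> V" using T3 B TF unfolding V_def by blast
  have covV: "\<And>x y. x \<in> V \<Longrightarrow> y \<in> V \<Longrightarrow> x \<noteq> y \<Longrightarrow> \<exists>X\<in>T. x \<in> X \<and> y \<in> X"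
    using cov unfolding V_def T_def by auto
  have U: "\<And>X Y u v. X \<in> T \<Longrightarrow> Y \<in> T \<Longrightarrow> u \<noteq> v \<Longrightarrow> u \<in> X \<Longrightarrow> v \<in> X \<Longrightarrow> u \<in> Y \<Longrightarrow> v \<in> Y \<Longrightarrow> X = Y"
    using Pf'_uniq[OF P] T3 TF by blast
  have n5: "n \<ge> 5"
  proof (rule ccontr)
    assume "\<not> n \<ge> 5"
    then have "card V = 2" using n cV by auto
    then obtain x y where xy: "V = {x,y}" "x \<noteq> y" by (auto simp: card_2_iff)
    then obtain X where X: "X \<in> T" "x \<in> X" "y \<in> X" using covV by auto
    have "X \<subseteq> {x,y}" using TV[OF X(1)] xy by auto
    then have "card X \<le> 2" by (metis card_2_iff card_mono finite.emptyI finite.insertI xy(2))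
    then show False using T3 X by auto
  qed
  have cV4: "card V \<ge> 4" using cV n5 by auto
  have fV: "finite V" unfolding V_def by auto
  obtain c where c: "c \<in> V" using ne_of_card[of V] cV4 by auto
  have "card (V - {c}) \<ge> 3" using cV4 c fV by simp
  then obtain d1 where d1: "d1 \<in> V" "d1 \<noteq> c" using ne_of_card[of "V - {c}"] by auto
  obtain T1 where T1: "T1 \<in> T" "c \<in> T1" "d1 \<in> T1" using covV[OF c d1(1)] d1(2) by auto
  have "card (V - T1) \<ge> 1"
  proof -
    have "card (V - T1) = card V - card T1" using TV[OF T1(1)] fV by (meson card_Diff_subset finite_subset)
    then show ?thesis using cV4 T3[OF T1(1)] by linarith
  qed
  then obtain d2 where d2: "d2 \<in> V" "d2 \<notin> T1" using ne_of_card[of "V - T1"] by auto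
  have d2c: "d2 \<noteq> c" using d2 T1 by auto
  obtain T2 where T2: "T2 \<in> T" "c \<in> T2" "d2 \<in> T2" using covV[OF c d2(1)] d2c by auto
  have T12: "T1 \<noteq> T2" using T2 d2 by auto
  have "card (T1 - {c}) = 2" using T3[OF T1(1)] T1(2) by (simp add: card_Diff_singleton)
  then obtain x1 y1 where xy1: "T1 - {c} = {x1,y1}" "x1 \<noteq> y1" by (auto simp: card_2_iff)
  have T1e: "T1 = {c,x1,y1}" "c \<noteq> x1" "c \<noteq> y1" using xy1 T1(2) by auto
  have "card (T2 - {c}) = 2" using T3[OF T2(1)] T2(2) by (simp add: card_Diff_singleton)
  then obtain x2 y2 where xy2: "T2 - {c} = {x2,y2}" "x2 \<noteq> y2" by (auto simp: card_2_iff)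
  have T2e: "T2 = {c,x2,y2}" "c \<noteq> x2" "c \<noteq> y2" using xy2 T2(2) by auto
  have x1T2: "x1 \<notin> T2" using U[OF T1(1) T2(1), of c x1] T1e T2(2) T12 by auto
  have y1T2: "y1 \<notin> T2" using U[OF T1(1) T2(1), of c y1] T1e T2(2) T12 by auto
  have x2T1: "x2 \<notin> T1" using U[OF T1(1) T2(1), of c x2] T2e T1(2) T12 by auto
  have y2T1: "y2 \<notin> T1" using U[OF T1(1) T2(1), of c y2] T2e T1(2) T12 by auto
  have x1V: "x1 \<in> V" "y1 \<in> V" using TV[OF T1(1)] T1e by auto
  have x2V: "x2 \<in> V" "y2 \<in> V" using TV[OF T2(1)] T2e by auto
  have x12: "x1 \<noteq> x2" using x1T2 T2e by auto
  obtain T3' where T3': "T3' \<in> T" "x1 \<in> T3'" "x2 \<in> T3'" using covV[OF x1V(1) x2V(1) x12] by auto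
  have "card (T3' - {x1,x2}) = 1" using T3[OF T3'(1)] T3' x12 by (simp add: card_Diff_subset)
  then obtain z where z: "T3' - {x1,x2} = {z}" using card_1_singletonE by blast
  have T3e: "T3' = {x1,x2,z}" "z \<noteq> x1" "z \<noteq> x2" using z T3' by auto
  have T13: "T3' \<noteq> T1" using T3' x2T1 by auto
  have T23: "T3' \<noteq> T2" using T3' x1T2 by auto
  have zc: "z \<noteq> c" using U[OF T1(1) T3'(1), of c x1] T1e T3e T13 by auto
  have zy1: "z \<noteq> y1" using U[OF T1(1) T3'(1), of x1 y1] T1e T3e T13 xy1 by auto
  have zy2: "z \<noteq> y2" using U[OF T2(1) T3'(1), of x2 y2] T2e T3e T23 xy2 by auto
  have pV: "p \<notin> V" unfolding V_def by auto
  have pc: "p \<noteq> c" "p \<noteq> x1" "p \<noteq> y1" "p \<noteq> x2" "p \<noteq> y2" using pV c x1V x2V by auto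
  have pz: "p \<noteq> z" using T3[OF T3'(1)] T3e by auto
  have dd: "x1 \<noteq> y2" "y1 \<noteq> x2" "y1 \<noteq> y2" using x1T2 y1T2 T2e by auto
  note dist = pc pz dd zc zy1 zy2 x12 T1e(2,3) T2e(2,3) T3e(2,3) xy1(2) xy2(2)
  define N where "N = {{p,c,y1},{p,x2,y2},{p,x1,z},{c,x1,x2}}"
  define R where "R = T - {T1,T2,T3'}"
  define G where "G = R \<union> N"
  have ne1: "{p,c,y1} \<noteq> {p,x2,y2}" "{p,c,y1} \<noteq> {p,x1,z}" "{p,c,y1} \<noteq> {c,x1,x2}"
    "{p,x2,y2} \<noteq> {p,x1,z}" "{p,x2,y2} \<noteq> {c,x1,x2}" "{p,x1,z} \<noteq> {c,x1,x2}"
    using dist by (auto simp: set_eq_iff)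
  have cN: "card N = 4" unfolding N_def using ne1 by auto
  have cR: "card R = card T - 3"
  proof -
    have "card R = card T - card {T1,T2,T3'}" unfolding R_def using T1 T2 T3' fT by (intro card_Diff_subset) auto
    moreover have "card {T1,T2,T3'} = 3" using T12 T13 T23 by auto
    ultimately show ?thesis by simp
  qed
  have RN: "R \<inter> N = {}"
  proof -
    have "{c,x1,x2} \<notin> T"
    proof
      assume "{c,x1,x2} \<in> T"
      then have "{c,x1,x2} = T1" using U[OF _ T1(1), of "{c,x1,x2}" c x1] T1e by auto
      then show False using x2T1 by auto
    qed
    then show ?thesis unfolding R_def N_def using T3 by auto
  qed
  have fR: "finite R" using fT unfolding R_def by auto
  have cT3: "card T \<ge> 3"
  proof -
    have "card {T1,T2,T3'} \<le> card T" using T1 T2 T3' fT by (intro card_mono) auto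
    then show ?thesis using T12 T13 T23 by auto
  qed
  have cG: "card G = Suc (card T)"
    unfolding G_def using card_Un_disjoint[OF fR _ RN] cN cR cT3 unfolding N_def by simp
  have RR: "\<And>X Y. X \<in> R \<Longrightarrow> Y \<in> R \<Longrightarrow> X \<noteq> Y \<Longrightarrow> card (X \<inter> Y) \<le> 1"
    using Pf'_tri[OF P] T3 TF unfolding R_def by blast
  have RNc: "\<And>X Y. X \<in> R \<Longrightarrow> Y \<in> N \<Longrightarrow> card (X \<inter> Y) \<le> 1"
  proof -
    fix X Y assume X: "X \<in> R" and Y: "Y \<in> N"
    have XT: "X \<in> T" "X \<noteq> T1" "X \<noteq> T2" "X \<noteq> T3'" using X unfolding R_def by auto
    have fX: "finite X" using B XT TF by auto
    have pX: "p \<notin> X" using T3 XT by auto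
    have n1: "\<not> (c \<in> X \<and> y1 \<in> X)" "\<not> (c \<in> X \<and> x1 \<in> X)" "\<not> (x1 \<in> X \<and> y1 \<in> X)"
      using U[OF XT(1) T1(1)] T1e xy1 XT(2) by auto
    have n2: "\<not> (c \<in> X \<and> x2 \<in> X)" "\<not> (x2 \<in> X \<and> y2 \<in> X)"
      using U[OF XT(1) T2(1)] T2e xy2 XT(3) by auto
    have n3: "\<not> (x1 \<in> X \<and> z \<in> X)" "\<not> (x1 \<in> X \<and> x2 \<in> X)"
      using U[OF XT(1) T3'(1)] T3e x12 XT(4) by auto
    show "card (X \<inter> Y) \<le> 1" using Y unfolding N_def
      using ok3[OF fX] pX n1 n2 n3 by auto
  qed
  have NN: "\<And>X Y. X \<in> N \<Longrightarrow> Y \<in> N \<Longrightarrow> X \<noteq> Y \<Longrightarrow> card (X \<inter> Y) \<le> 1"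
    unfolding N_def using dist by auto
  have "Pf n G"
  proof (rule Pf_intro)
    have "c < n" "x1 < n" "x2 < n" "y1 < n" "y2 < n" "z < n"
      using c x1V x2V TV[OF T3'(1)] T3e unfolding V_def by auto
    then show "G \<subseteq> Pow {..<n}" using B TF pn unfolding G_def R_def N_def by auto
    fix X assume X: "X \<in> G"
    show "card X = 3" using X T3 dist unfolding G_def R_def N_def by auto
    fix Y assume Y: "Y \<in> G" and XY: "X \<noteq> Y"
    have RN2: "\<And>X Y. X \<in> N \<Longrightarrow> Y \<in> R \<Longrightarrow> card (X \<inter> Y) \<le> 1" using RNc by (metis Int_commute)
    show "card (X \<inter> Y) \<le> 1" using X Y XY RR RNc RN2 NN unfolding G_def by blast
  qed
  then show ?thesis using cF cG by auto
qed

lemma key: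
  assumes P: "Pf' n F" and n: "n = 3 \<or> n \<ge> 5"
  shows "\<exists>G. Pf n G \<and> card F \<le> card G"
proof (cases "{} \<in> F")
  case True then show ?thesis using case_empty[OF P True] n by auto
next
  case ne: False
  note B = Pf'_basic[OF P]
  show ?thesis
  proof (cases "\<exists>P0\<in>F. card P0 = 2")
    case True
    then obtain P0 where P0: "P0 \<in> F" "card P0 = 2" by auto
    show ?thesis
    proof (cases "\<exists>x<n. \<forall>P\<in>F. card P = 2 \<longrightarrow> x \<notin> P")
      case True
      then obtain x where "x < n" "\<forall>P\<in>F. card P = 2 \<longrightarrow> x \<notin> P" by auto
      then show ?thesis using case_A1[OF P P0] by blast
    next
      case False
      then have "\<forall>x<n. \<exists>Q\<in>F. card Q = 2 \<and> x \<in> Q" by auto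
      then show ?thesis using case_A2[OF P P0 _ n] by blast
    qed
  next
    case no2: False
    show ?thesis
    proof (cases "\<exists>S\<in>F. card S = 1")
      case True
      then obtain S where S: "S \<in> F" "card S = 1" by auto
      then obtain p where Sp: "S = {p}" using card_1_singletonE by blast
      with S have Sp': "{p} \<in> F" by simp
      show ?thesis
      proof (cases "\<exists>x y. x < n \<and> y < n \<and> x \<noteq> y \<and> x \<noteq> p \<and> y \<noteq> p \<and> (\<forall>X\<in>F - {{p}}. \<not> (x \<in> X \<and> y \<in> X))")
        case True
        then obtain x y where "x < n" "y < n" "x \<noteq> y" "x \<noteq> p" "y \<noteq> p" "\<forall>X\<in>F - {{p}}. \<not> (x \<in> X \<and> y \<in> X)" by blast
        then show ?thesis using case_B1[OF P Sp'] by blast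
      next
        case False
        then have "\<And>x y. x < n \<Longrightarrow> y < n \<Longrightarrow> x \<noteq> y \<Longrightarrow> x \<noteq> p \<Longrightarrow> y \<noteq> p \<Longrightarrow> \<exists>X\<in>F - {{p}}. x \<in> X \<and> y \<in> X"
          by blast
        then show ?thesis using case_B2[OF P Sp' _ n] by blast
      qed
    next
      case False
      have "\<forall>X\<in>F. card X = 3"
      proof
        fix X assume X: "X \<in> F"
        have "card X \<noteq> 0" using X ne B by auto
        then show "card X = 3" using X no2 False B by (metis le_Suc_eq numeral_3_eq_3 numeral_2_eq_2 One_nat_def le_zero_eq)
      qed
      then show ?thesis using case_triples[OF P] by blast
    qed
  qed
qed


lemma main_eq:
  assumes "n = 3 \<or> n \<ge> 5"
  shows "A' n 4 3 = A n 4 3"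
proof -
  let ?X' = "{card F | F. Pf' n F}" and ?X = "{card F | F. Pf n F}"
  have ne': "?X' \<noteq> {}"
  proof -
    have "Pf' n {{}}" unfolding Pf'_def by auto
    then show ?thesis by blast
  qed
  have ne: "?X \<noteq> {}"
  proof -
    have "Pf n {}" unfolding Pf_def by auto
    then show ?thesis by blast
  qed
  have le1: "Max ?X' \<le> Max ?X"
  proof -
    have "Max ?X' \<in> ?X'" using Max_in[OF fin_Pf' ne'] .
    then obtain F where F: "Pf' n F" "Max ?X' = card F" by auto
    obtain G where G: "Pf n G" "card F \<le> card G" using key[OF F(1) assms] by auto
    have "card G \<in> ?X" using G(1) by auto
    then have "card G \<le> Max ?X" using fin_Pf by auto
    then show ?thesis using F G by linarith
  qed
  have le2: "Max ?X \<le> Max ?X'"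
  proof -
    have "Max ?X \<in> ?X" using Max_in[OF fin_Pf ne] .
    then obtain G where G: "Pf n G" "Max ?X = card G" by auto
    have "\<exists>G'. Pf' n G' \<and> card G \<le> card G'"
    proof (cases "G = {}")
      case True
      have "Pf' n {{}}" unfolding Pf'_def by auto
      then show ?thesis using True by auto
    next
      case False
      then have "Pf' n G" using G(1) unfolding Pf_def Pf'_def by auto
      then show ?thesis by auto
    qed
    then obtain G' where G': "Pf' n G'" "card G \<le> card G'" by auto
    have "card G' \<in> ?X'" using G'(1) by auto
    then have "card G' \<le> Max ?X'" using fin_Pf' by auto
    then show ?thesis using G G' by linarith
  qed
  show ?thesis using le1 le2 A'_fam A_fam by simp
qed

lemma small_le1:
  assumes "n < 4" "Pf' n F" shows "card F \<le> 1"
proof -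
  have fin: "finite F" using assms(2) unfolding Pf'_def by (meson finite_Pow_iff finite_lessThan finite_subset)
  have "\<forall>X\<in>F. \<forall>Y\<in>F. X = Y"
  proof (intro ballI, rule ccontr)
    fix X Y assume XY: "X \<in> F" "Y \<in> F" "X \<noteq> Y"
    have "card (sd X Y) \<ge> 4" using assms(2) XY unfolding Pf'_def by auto
    moreover have "sd X Y \<subseteq> {..<n}" using assms(2) XY unfolding Pf'_def sd_def by auto
    then have "card (sd X Y) \<le> n" by (metis card_lessThan card_mono finite_lessThan)
    ultimately show False using assms(1) by linarith
  qed
  then show ?thesis using fin by (simp add: card_le_Suc0_iff_eq)
qed

lemma small_A': assumes "n < 4" shows "A' n 4 3 = 1"
proof -
  have "Pf' n {{}}" unfolding Pf'_def by auto
  then have "1 \<in> {card F | F. Pf' n F}" by force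
  moreover have "\<And>y. y \<in> {card F | F. Pf' n F} \<Longrightarrow> y \<le> 1" using small_le1[OF assms] by auto
  ultimately show ?thesis unfolding A'_fam by (intro Max_eqI fin_Pf') auto
qed

lemma four_le2:
  assumes "Pf' 4 F" shows "card F \<le> 2"
proof -
  obtain X where X: "X \<in> F" using assms unfolding Pf'_def by auto
  have "F \<subseteq> {X, {..<4} - X}"
  proof
    fix Y assume Y: "Y \<in> F"
    show "Y \<in> {X, {..<4} - X}"
    proof (cases "Y = X")
      case False
      have "card (sd X Y) \<ge> 4" using assms X Y False unfolding Pf'_def by auto
      moreover have sub: "sd X Y \<subseteq> {..<4}" using assms X Y unfolding Pf'_def sd_def by auto
      ultimately have "sd X Y = {..<4}"
        by (metis card_lessThan card_mono card_subset_eq finite_lessThan le_antisym)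
      moreover have "X \<subseteq> {..<4}" "Y \<subseteq> {..<4}" using assms X Y unfolding Pf'_def by auto
      ultimately have "Y = {..<4} - X" unfolding sd_def by blast
      then show ?thesis by simp
    qed simp
  qed
  then have "card F \<le> card {X, {..<4::nat} - X}" by (intro card_mono) auto
  also have "\<dots> \<le> 2" by (simp add: card_insert_le_m1)
  finally show ?thesis .
qed

lemma four_A': "A' 4 4 3 = 2"
proof -
  have "Pf' 4 {{0}, {1,2,3}}" unfolding Pf'_def sd_def by (auto simp: lessThan_nat_numeral)
  then have "card {{0::nat}, {1,2,3}} \<in> {card F | F. Pf' 4 F}" by blast
  moreover have "card {{0::nat}, {1,2,3}} = 2" by simp
  ultimately have "2 \<in> {card F | F. Pf' 4 F}" by metis
  moreover have "\<And>y. y \<in> {card F | F. Pf' 4 F} \<Longrightarrow> y \<le> 2" using four_le2 by auto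
  ultimately show ?thesis unfolding A'_fam by (intro Max_eqI fin_Pf') auto
qed

theorem corollary2:
  shows "(\<forall>n::nat. n > 0 \<and> n \<notin> {1, 2, 4} \<longrightarrow> A' n 4 3 = A n 4 3)
    \<and> A' 1 4 3 = 1 \<and> A' 2 4 3 = 1 \<and> A' 4 4 3 = 2"
proof (intro conjI allI impI)
  fix n :: nat assume "0 < n \<and> n \<notin> {1, 2, 4}"
  then have "n = 3 \<or> n \<ge> 5" by auto
  then show "A' n 4 3 = A n 4 3" by (rule main_eq)
qed (simp_all add: small_A' four_A')

end
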